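(* Let $f:[0,\infty)\to[0,\infty)$ be a measurable function with $\int_0^\infty ds\, f(s)\le 1$, let $g(t)=1-\int_0^t ds\,f(s)$, and let $\kappa(t)$ be the solution of the integral equation $$\int_0^t ds\, g(t-s)\kappa(s)=f(t),$$ equivalently $\widehat\kappa(p)=\dfrac{p\widehat f(p)}{1-\widehat f(p)}$. Let $B$ be a completely positive map on $M_d$ with $B\mathbf 1=\mathbf 1$. Define $L_t=\kappa(t)(B-I)$, $t\ge0$. Then $L_t$ is the generator of a non-Markovian master equation, i.e. the solution $A_t$, $t\ge 0$, of $$\frac{dA_t}{dt}=\int_0^t ds\,L_{t-s}A_s,\qquad A_0=I,$$ is completely positive and satisfies $A_t\mathbf 1=\mathbf 1$ for all $t\ge0$.
   Context: $M_d$ denotes the $C^*$-algebra of complex $d\times d$ matrices, with unit $\mathbf 1$; $\mathcal B(M_d)$ is the algebra of linear maps $M_d\to M_d$, with identity map $I$. For a scalar function $f$ on $[0,\infty)$, $\widehat f(p)=\int_0^\infty dt\,e^{-pt}f(t)$ is its Laplace transform; similarly for $\mathcal B(M_d)$-valued functions. *)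

theory Defs
  imports "HOL-Analysis.Analysis"
begin

type_synonym 'd cmat = "complex ^ 'd ^ 'd"

definition cmat_scale :: "complex \<Rightarrow> 'd::finite cmat \<Rightarrow> 'd cmat" where
  "cmat_scale c X = (\<chi> i j. c * X $ i $ j)"

definition cmat_linear :: "('d::finite cmat \<Rightarrow> 'd cmat) \<Rightarrow> bool" where
  "cmat_linear T \<longleftrightarrow> (\<forall>X Y. T (X + Y) = T X + T Y) \<and> (\<forall>c X. T (cmat_scale c X) = cmat_scale c (T X))"

definition nonneg_complex :: "complex \<Rightarrow> bool" where
  "nonneg_complex z \<longleftrightarrow> Im z = 0 \<and> Re z \<ge> 0"

text \<open>A k x k block matrix with entries in M_d (an element of M_k(M_d) = M_{kd}) is positive
  (positive semidefinite): for every vector (v_0,...,v_{k-1}) in (C^d)^k,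
  sum_{i,j} v_i^* X_{ij} v_j >= 0.\<close>
definition block_positive :: "nat \<Rightarrow> (nat \<Rightarrow> nat \<Rightarrow> 'd::finite cmat) \<Rightarrow> bool" where
  "block_positive k X \<longleftrightarrow>
     (\<forall>v :: nat \<Rightarrow> complex ^ 'd.
        nonneg_complex (\<Sum>i<k. \<Sum>j<k. \<Sum>a\<in>UNIV. cnj (v i $ a) * ((X i j *v v j) $ a)))"

text \<open>Complete positivity: id_k \<otimes> T is positive for every k.\<close>
definition completely_positive :: "('d::finite cmat \<Rightarrow> 'd cmat) \<Rightarrow> bool" where
  "completely_positive T \<longleftrightarrow>
     cmat_linear T \<and>
     (\<forall>k X. block_positive k X \<longrightarrow> block_positive k (\<lambda>i j. T (X i j)))"

end

theory Submission
  imports Defs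
begin


lemma ind_refl: "indicator {0..(t::real)} (t - x) = (indicator {0..t} x :: 'b::zero_neq_one)"
  by (auto simp: indicator_def)

lemma refl_int:
  fixes a :: "real \<Rightarrow> 'a::{banach,second_countable_topology}"
  shows "(LINT s:{0..t}|lborel. a (t - s)) = (LINT r:{0..t}|lborel. a r)"
proof -
  have "(LINT r:{0..t}|lborel. a r) = \<bar>-1\<bar> *\<^sub>R (\<integral>x. indicator {0..t} (t + -1*x) *\<^sub>R a (t + -1 * x) \<partial>lborel)"
    unfolding set_lebesgue_integral_def by (rule lborel_integral_real_affine) simp
  also have "\<dots> = (LINT s:{0..t}|lborel. a (t - s))"
    unfolding set_lebesgue_integral_def by (simp add: ind_refl)
  finally show ?thesis ..
qed

lemma refl_integrable:
  fixes a :: "real \<Rightarrow> 'a::{banach,second_countable_topology}"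
  shows "set_integrable lborel {0..t} (\<lambda>s. a (t - s)) \<longleftrightarrow> set_integrable lborel {0..t} a"
proof -
  have "set_integrable lborel {0..t} a \<longleftrightarrow> integrable lborel (\<lambda>x. indicator {0..t} (t + -1*x) *\<^sub>R a (t + -1 * x))"
    unfolding set_integrable_def by (rule lborel_integrable_real_affine_iff[symmetric]) simp
  also have "\<dots> \<longleftrightarrow> set_integrable lborel {0..t} (\<lambda>s. a (t - s))"
    unfolding set_integrable_def by (simp add: ind_refl)
  finally show ?thesis ..
qed

lemma refl_nn:
  fixes \<phi> :: "real \<Rightarrow> ennreal"
  assumes [measurable]: "\<phi> \<in> borel_measurable borel"
  shows "(\<integral>\<^sup>+ s. indicator {0..t} s * \<phi> (t - s) \<partial>lborel) = (\<integral>\<^sup>+ r. indicator {0..t} r * \<phi> r \<partial>lborel)"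
proof -
  have "(\<integral>\<^sup>+ r. indicator {0..t} r * \<phi> r \<partial>lborel) = ennreal \<bar>-1\<bar> * (\<integral>\<^sup>+ x. indicator {0..t} (t + -1*x) * \<phi> (t + -1 * x) \<partial>lborel)"
    by (rule nn_integral_real_affine) auto
  also have "\<dots> = (\<integral>\<^sup>+ s. indicator {0..t} s * \<phi> (t - s) \<partial>lborel)"
    by (simp add: ind_refl)
  finally show ?thesis ..
qed

lemma shift_int:
  fixes \<phi> :: "real \<Rightarrow> 'a::{banach,second_countable_topology}"
  shows "(\<integral>r. \<phi> r \<partial>lborel) = (\<integral>v. \<phi> (v - s) \<partial>lborel)"
  using lborel_integral_real_affine[of 1 \<phi> "-s"] by simp

definition conv :: "(real \<Rightarrow> real) \<Rightarrow> (real \<Rightarrow> 'a::{banach,second_countable_topology}) \<Rightarrow> real \<Rightarrow> 'a" where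
  "conv a h t = (LINT s:{0..t}|lborel. a (t - s) *\<^sub>R h s)"

lemma sets_bl: "sets (borel \<Otimes>\<^sub>M lborel) = sets (borel \<Otimes>\<^sub>M (borel::real measure))"
  by (rule sets_pair_measure_cong) auto

lemma sets_ll: "sets (lborel \<Otimes>\<^sub>M lborel) = sets (borel \<Otimes>\<^sub>M (borel::real measure))"
  by (rule sets_pair_measure_cong) auto

lemma conv_meas[measurable]:
  assumes [measurable]: "a \<in> borel_measurable borel" "h \<in> borel_measurable borel"
  shows "conv a h \<in> borel_measurable borel"
  unfolding conv_def set_lebesgue_integral_def
  apply (rule lborel.borel_measurable_lebesgue_integral)
  apply (subst measurable_cong_sets[OF sets_bl refl])
  unfolding atLeastAtMost_iff indicator_def by measurable

lemma conv_cong: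
  assumes "\<And>s. s \<in> {0..t} \<Longrightarrow> a (t - s) = a' (t - s)" "\<And>s. s \<in> {0..t} \<Longrightarrow> h s = h' s"
  shows "conv a h t = conv a' h' t"
  unfolding conv_def by (rule set_lebesgue_integral_cong) (auto simp: assms)

lemma integral_scaleR_left':
  fixes f :: "'b \<Rightarrow> real" and c :: "'a::euclidean_space"
  shows "(\<integral>x. f x *\<^sub>R c \<partial>M) = integral\<^sup>L M f *\<^sub>R c"
proof (cases "c = 0 \<or> integrable M f")
  case True then show ?thesis by auto
next
  case False
  have "\<not> integrable M (\<lambda>x. f x *\<^sub>R c)"
  proof
    assume "integrable M (\<lambda>x. f x *\<^sub>R c)"
    then have "integrable M (\<lambda>x. inner (f x *\<^sub>R c) c / (inner c c))"
      by (intro integrable_divide integrable_inner_left)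
    moreover have "(\<lambda>x. inner (f x *\<^sub>R c) c / (inner c c)) = f" using False by auto
    ultimately show False using False by simp
  qed
  then show ?thesis using False by (simp add: not_integrable_integral_eq)
qed

lemma conv_assoc:
  fixes h :: "real \<Rightarrow> 'a::euclidean_space"
  assumes [measurable]: "a \<in> borel_measurable borel" "b \<in> borel_measurable borel" "h \<in> borel_measurable borel"
  and ia: "set_integrable lborel {0..t} a" and ib: "set_integrable lborel {0..t} b"
  and hb: "\<And>s. s \<in> {0..t} \<Longrightarrow> norm (h s) \<le> H" and H: "0 \<le> H"
  shows "conv (conv a b) h t = conv a (conv b h) t"
proof -
  define \<Phi> where "\<Phi> = (\<lambda>s v. if 0 \<le> s \<and> s \<le> v \<and> v \<le> t then (a (t-v) * b (v-s)) *\<^sub>R h s else 0)"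
  have [measurable]: "case_prod \<Phi> \<in> borel_measurable (lborel \<Otimes>\<^sub>M lborel)"
    apply (subst measurable_cong_sets[OF sets_ll refl])
    unfolding \<Phi>_def by measurable
  have L: "indicator {0..t} s *\<^sub>R (conv a b (t - s) *\<^sub>R h s) = (\<integral>v. \<Phi> s v \<partial>lborel)" for s
  proof (cases "s \<in> {0..t}")
    case True
    have "conv a b (t - s) = (\<integral>r. indicator {0..t-s} r *\<^sub>R (a (t - s - r) *\<^sub>R b r) \<partial>lborel)"
      unfolding conv_def set_lebesgue_integral_def ..
    also have "\<dots> = (\<integral>v. indicator {0..t-s} (v - s) *\<^sub>R (a (t - s - (v - s)) *\<^sub>R b (v - s)) \<partial>lborel)"
      by (rule shift_int)
    also have "\<dots> = (\<integral>v. (if s \<le> v \<and> v \<le> t then a (t-v) * b (v-s) else 0) \<partial>lborel)"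
      by (rule Bochner_Integration.integral_cong) (auto simp: indicator_def)
    finally have "conv a b (t - s) *\<^sub>R h s = (\<integral>v. (if s \<le> v \<and> v \<le> t then a (t-v) * b (v-s) else 0) *\<^sub>R h s \<partial>lborel)"
      by (simp add: integral_scaleR_left')
    also have "\<dots> = (\<integral>v. \<Phi> s v \<partial>lborel)"
      using True by (intro Bochner_Integration.integral_cong) (auto simp: \<Phi>_def)
    finally show ?thesis using True by simp
  next
    case False
    then have "\<Phi> s v = 0" for v by (auto simp: \<Phi>_def)
    then show ?thesis using False by simp
  qed
  have R: "indicator {0..t} v *\<^sub>R (a (t - v) *\<^sub>R conv b h v) = (\<integral>s. \<Phi> s v \<partial>lborel)" for v
  proof (cases "v \<in> {0..t}")
    case True
    have "a (t - v) *\<^sub>R conv b h v = (\<integral>s. a (t - v) *\<^sub>R (indicator {0..v} s *\<^sub>R (b (v - s) *\<^sub>R h s)) \<partial>lborel)"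
      unfolding conv_def set_lebesgue_integral_def integral_scaleR_right[symmetric] by (simp del: integral_scaleR_right)
    also have "\<dots> = (\<integral>s. \<Phi> s v \<partial>lborel)"
      using True by (intro Bochner_Integration.integral_cong) (auto simp: \<Phi>_def indicator_def)
    finally show ?thesis using True by simp
  next
    case False
    then have "\<Phi> s v = 0" for s by (auto simp: \<Phi>_def)
    then show ?thesis using False by simp
  qed
  have int: "integrable (lborel \<Otimes>\<^sub>M lborel) (case_prod \<Phi>)"
  proof (subst integrable_iff_bounded, intro conjI)
    show "case_prod \<Phi> \<in> borel_measurable (lborel \<Otimes>\<^sub>M lborel)" by measurable
    define Ia where "Ia = (\<integral>\<^sup>+ r. indicator {0..t} r * ennreal (norm (a r)) \<partial>lborel)"
    define Ib where "Ib = (\<integral>\<^sup>+ r. indicator {0..t} r * ennreal (norm (b r)) \<partial>lborel)"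
    have Ia: "Ia < \<infinity>"
    proof -
      have "Ia = (\<integral>\<^sup>+ x. ennreal (norm (indicator {0..t} x *\<^sub>R a x)) \<partial>lborel)"
        unfolding Ia_def by (intro nn_integral_cong) (auto simp: indicator_def)
      then show ?thesis using ia unfolding set_integrable_def integrable_iff_bounded by simp
    qed
    have Ib: "Ib < \<infinity>"
    proof -
      have "Ib = (\<integral>\<^sup>+ x. ennreal (norm (indicator {0..t} x *\<^sub>R b x)) \<partial>lborel)"
        unfolding Ib_def by (intro nn_integral_cong) (auto simp: indicator_def)
      then show ?thesis using ib unfolding set_integrable_def integrable_iff_bounded by simp
    qed
    have inner: "(\<integral>\<^sup>+ s. ennreal (norm (\<Phi> s v)) \<partial>lborel) \<le> indicator {0..t} v * ennreal (norm (a (t - v))) * (Ib * ennreal H)" for v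
    proof (cases "v \<in> {0..t}")
      case True
      have "(\<integral>\<^sup>+ s. ennreal (norm (\<Phi> s v)) \<partial>lborel) \<le> (\<integral>\<^sup>+ s. ennreal (norm (a (t - v))) * ((indicator {0..v} s * ennreal (norm (b (v - s)))) * ennreal H) \<partial>lborel)"
      proof (intro nn_integral_mono)
        fix s
        show "ennreal (norm (\<Phi> s v)) \<le> ennreal (norm (a (t - v))) * ((indicator {0..v} s * ennreal (norm (b (v - s)))) * ennreal H)"
        proof (cases "0 \<le> s \<and> s \<le> v")
          case True
          with \<open>v \<in> {0..t}\<close> have "norm (h s) \<le> H" by (intro hb) auto
          then have "norm (\<Phi> s v) \<le> norm (a (t - v)) * (norm (b (v - s)) * H)"
            using True \<open>v \<in> {0..t}\<close> by (auto simp: \<Phi>_def abs_mult mult.assoc intro!: mult_left_mono)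
          then show ?thesis using True H
            by (simp add: ennreal_mult'[symmetric] ennreal_mult[symmetric] ennreal_leI)
        qed (auto simp: \<Phi>_def)
      qed
      also have "\<dots> = ennreal (norm (a (t - v))) * ((\<integral>\<^sup>+ s. indicator {0..v} s * ennreal (norm (b (v - s))) \<partial>lborel) * ennreal H)"
        by (simp add: nn_integral_cmult nn_integral_multc)
      also have "(\<integral>\<^sup>+ s. indicator {0..v} s * ennreal (norm (b (v - s))) \<partial>lborel) = (\<integral>\<^sup>+ r. indicator {0..v} r * ennreal (norm (b r)) \<partial>lborel)"
        by (rule refl_nn) measurable
      also have "\<dots> \<le> Ib"
        unfolding Ib_def using True by (intro nn_integral_mono) (auto simp: indicator_def)
      finally show ?thesis using True by (auto simp: mult_left_mono mult_right_mono)
    next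
      case False
      then have "\<Phi> s v = 0" for s by (auto simp: \<Phi>_def)
      then show ?thesis using False by simp
    qed
    have "(\<integral>\<^sup>+ z. ennreal (norm (case_prod \<Phi> z)) \<partial>(lborel \<Otimes>\<^sub>M lborel)) = (\<integral>\<^sup>+ v. \<integral>\<^sup>+ s. ennreal (norm (\<Phi> s v)) \<partial>lborel \<partial>lborel)"
    proof -
      have m: "(\<lambda>z. ennreal (norm (case_prod \<Phi> z))) \<in> borel_measurable (lborel \<Otimes>\<^sub>M lborel)"
        by measurable
      show ?thesis using lborel_pair.nn_integral_snd[OF m] by simp
    qed
    also have "\<dots> \<le> (\<integral>\<^sup>+ v. indicator {0..t} v * ennreal (norm (a (t - v))) * (Ib * ennreal H) \<partial>lborel)"
      by (intro nn_integral_mono inner)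
    also have "\<dots> = (\<integral>\<^sup>+ v. indicator {0..t} v * ennreal (norm (a (t - v))) \<partial>lborel) * (Ib * ennreal H)"
      by (simp add: nn_integral_multc)
    also have "(\<integral>\<^sup>+ v. indicator {0..t} v * ennreal (norm (a (t - v))) \<partial>lborel) = Ia"
      unfolding Ia_def by (rule refl_nn) measurable
    also have "Ia * (Ib * ennreal H) < \<infinity>"
      using Ia Ib by (simp add: ennreal_mult_less_top)
    finally show "(\<integral>\<^sup>+ z. ennreal (norm (case_prod \<Phi> z)) \<partial>(lborel \<Otimes>\<^sub>M lborel)) < \<infinity>" .
  qed
  have "conv (conv a b) h t = (\<integral>s. \<integral>v. \<Phi> s v \<partial>lborel \<partial>lborel)"
    unfolding conv_def[of "conv a b"] set_lebesgue_integral_def using L by simp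
  also have "\<dots> = (\<integral>v. \<integral>s. \<Phi> s v \<partial>lborel \<partial>lborel)"
    using lborel_pair.Fubini_integral[OF int] by simp
  also have "\<dots> = conv a (conv b h) t"
    unfolding conv_def[of a] set_lebesgue_integral_def using R by simp
  finally show ?thesis .
qed


lemma conv_integrable:
  fixes h :: "real \<Rightarrow> 'a::{banach,second_countable_topology}"
  assumes [measurable]: "a \<in> borel_measurable borel" "h \<in> borel_measurable borel"
  and ia: "set_integrable lborel {0..t} a"
  and hb: "\<And>s. s \<in> {0..t} \<Longrightarrow> norm (h s) \<le> H"
  shows "set_integrable lborel {0..t} (\<lambda>s. a (t - s) *\<^sub>R h s)"
proof -
  have "set_integrable lborel {0..t} (\<lambda>s. a (t - s))" using ia by (simp add: refl_integrable)
  then have i2: "set_integrable lborel {0..t} (\<lambda>s. a (t - s) * H)" by simp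
  show ?thesis unfolding set_integrable_def
  proof (rule Bochner_Integration.integrable_bound[OF i2[unfolded set_integrable_def]])
    show "(\<lambda>x. indicat_real {0..t} x *\<^sub>R a (t - x) *\<^sub>R h x) \<in> borel_measurable lborel" by measurable
    show "AE x in lborel. norm (indicat_real {0..t} x *\<^sub>R a (t - x) *\<^sub>R h x) \<le> norm (indicat_real {0..t} x *\<^sub>R (a (t - x) * H))"
    proof (intro AE_I2)
      fix x show "norm (indicat_real {0..t} x *\<^sub>R a (t - x) *\<^sub>R h x) \<le> norm (indicat_real {0..t} x *\<^sub>R (a (t - x) * H))"
      proof (cases "x \<in> {0..t}")
        case True
        then have "norm (h x) \<le> H" by (rule hb)
        then show ?thesis using True by (auto simp: abs_mult intro!: mult_left_mono)
      qed auto
    qed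
  qed
qed

lemma conv_norm_le:
  fixes h :: "real \<Rightarrow> 'a::{banach,second_countable_topology}"
  assumes [measurable]: "a \<in> borel_measurable borel" "h \<in> borel_measurable borel" "g \<in> borel_measurable borel"
  and ia: "set_integrable lborel {0..t} a"
  and hb: "\<And>s. s \<in> {0..t} \<Longrightarrow> norm (h s) \<le> g s" and gb: "\<And>s. s \<in> {0..t} \<Longrightarrow> g s \<le> H"
  shows "norm (conv a h t) \<le> (LINT s:{0..t}|lborel. \<bar>a (t - s)\<bar> * g s)"
proof -
  have i1: "set_integrable lborel {0..t} (\<lambda>s. a (t - s) *\<^sub>R h s)"
    by (rule conv_integrable[OF _ _ ia]) (use hb gb in \<open>auto intro: order_trans\<close>)
  have i2: "set_integrable lborel {0..t} (\<lambda>s. \<bar>a (t - s)\<bar> *\<^sub>R g s)"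
  proof (rule conv_integrable[where a="\<lambda>x. \<bar>a x\<bar>" and H=H])
    show "set_integrable lborel {0..t} (\<lambda>x. \<bar>a x\<bar>)" using ia by (rule set_integrable_abs)
    fix s assume "s \<in> {0..t}"
    then have "norm (h s) \<le> g s" "g s \<le> H" using hb[of s] gb[of s] by auto
    moreover have "0 \<le> norm (h s)" by simp
    ultimately show "norm (g s) \<le> H" by (metis abs_of_nonneg order_trans real_norm_def)
  qed auto
  have "norm (conv a h t) \<le> (\<integral>x. norm (indicator {0..t} x *\<^sub>R (a (t - x) *\<^sub>R h x)) \<partial>lborel)"
    unfolding conv_def set_lebesgue_integral_def by (rule integral_norm_bound)
  also have "\<dots> \<le> (\<integral>x. indicator {0..t} x *\<^sub>R (\<bar>a (t - x)\<bar> * g x) \<partial>lborel)"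
  proof (rule integral_mono)
    show "integrable lborel (\<lambda>x. norm (indicat_real {0..t} x *\<^sub>R a (t - x) *\<^sub>R h x))"
      using integrable_norm[OF i1[unfolded set_integrable_def]] .
    show "integrable lborel (\<lambda>x. indicat_real {0..t} x *\<^sub>R (\<bar>a (t - x)\<bar> * g x))"
      using i2 unfolding set_integrable_def by auto
    fix x show "norm (indicat_real {0..t} x *\<^sub>R a (t - x) *\<^sub>R h x) \<le> indicat_real {0..t} x *\<^sub>R (\<bar>a (t - x)\<bar> * g x)"
      using hb[of x] by (auto simp: indicator_def intro: mult_left_mono)
  qed
  finally show ?thesis unfolding set_lebesgue_integral_def .
qed

lemma conv_bound:
  fixes h :: "real \<Rightarrow> 'a::{banach,second_countable_topology}"
  assumes [measurable]: "a \<in> borel_measurable borel" "h \<in> borel_measurable borel"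
  and ia: "set_integrable lborel {0..t} a"
  and hb: "\<And>s. s \<in> {0..t} \<Longrightarrow> norm (h s) \<le> H"
  shows "norm (conv a h t) \<le> H * (LINT r:{0..t}|lborel. \<bar>a r\<bar>)"
proof -
  have "norm (conv a h t) \<le> (LINT s:{0..t}|lborel. \<bar>a (t - s)\<bar> * H)"
    by (rule conv_norm_le[OF _ _ _ ia hb]) auto
  also have "\<dots> = H * (LINT s:{0..t}|lborel. \<bar>a (t - s)\<bar>)" by (simp add: mult.commute)
  also have "\<dots> = H * (LINT r:{0..t}|lborel. \<bar>a r\<bar>)" using refl_int[where a="\<lambda>x. \<bar>a x\<bar>" and t=t] by simp
  finally show ?thesis .
qed

lemma conv_const:
  fixes c :: "'a::euclidean_space"
  shows "conv a (\<lambda>_. c) t = (LINT r:{0..t}|lborel. a r) *\<^sub>R c"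
proof -
  have "conv a (\<lambda>_. c) t = (\<integral>s. (indicator {0..t} s * a (t - s)) *\<^sub>R c \<partial>lborel)"
    unfolding conv_def set_lebesgue_integral_def by simp
  also have "\<dots> = (LINT s:{0..t}|lborel. a (t - s)) *\<^sub>R c"
    unfolding set_lebesgue_integral_def by (simp add: integral_scaleR_left')
  finally show ?thesis by (simp add: refl_int)
qed

lemma conv_add:
  assumes "set_integrable lborel {0..t} (\<lambda>s. a (t - s) *\<^sub>R h1 s)" "set_integrable lborel {0..t} (\<lambda>s. a (t - s) *\<^sub>R h2 s)"
  shows "conv a (\<lambda>s. h1 s + h2 s) t = conv a h1 t + conv a h2 t"
  unfolding conv_def using set_integral_add(2)[OF assms] by (simp add: scaleR_add_right)

lemma conv_diff:
  assumes "set_integrable lborel {0..t} (\<lambda>s. a (t - s) *\<^sub>R h1 s)" "set_integrable lborel {0..t} (\<lambda>s. a (t - s) *\<^sub>R h2 s)"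
  shows "conv a (\<lambda>s. h1 s - h2 s) t = conv a h1 t - conv a h2 t"
  unfolding conv_def using set_integral_diff(2)[OF assms] by (simp add: scaleR_diff_right)

lemma ftc_set:
  fixes u w :: "real \<Rightarrow> 'a::euclidean_space"
  assumes s: "0 \<le> s" and d: "\<And>\<tau>. \<tau> \<in> {0..s} \<Longrightarrow> (u has_vector_derivative w \<tau>) (at \<tau> within {0..})"
  and i: "set_integrable lborel {0..s} w"
  shows "(LINT \<tau>:{0..s}|lborel. w \<tau>) = u s - u 0"
proof -
  have "(w has_integral (u s - u 0)) {0..s}"
    by (rule fundamental_theorem_of_calculus[OF s]) (auto intro: has_vector_derivative_within_subset[OF d])
  then show ?thesis using set_borel_integral_eq_integral(2)[OF i] by (simp add: integral_unique)
qed


lemma conv_diff_left: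
  assumes "set_integrable lborel {0..t} (\<lambda>s. a1 (t - s) *\<^sub>R h s)" "set_integrable lborel {0..t} (\<lambda>s. a2 (t - s) *\<^sub>R h s)"
  shows "conv (\<lambda>x. a1 x - a2 x) h t = conv a1 h t - conv a2 h t"
  unfolding conv_def using set_integral_diff(2)[OF assms] by (simp add: scaleR_diff_left)

lemma conv_cong_AE:
  assumes [measurable]: "a \<in> borel_measurable borel" "a' \<in> borel_measurable borel" "h \<in> borel_measurable borel"
  assumes "AE s in lborel. s \<in> {0..t} \<longrightarrow> a (t - s) = a' (t - s)"
  shows "conv a h t = conv a' h t"
  unfolding conv_def by (rule set_lebesgue_integral_cong_AE) (use assms in auto)

lemma set_integrable_bounded_Icc:
  fixes h :: "real \<Rightarrow> 'a::{banach,second_countable_topology}"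
  assumes [measurable]: "h \<in> borel_measurable borel" and "\<And>s. s \<in> {a..b} \<Longrightarrow> norm (h s) \<le> H"
  shows "set_integrable lborel {a..b} h"
  unfolding set_integrable_def
  by (rule integrableI_bounded_set_indicator[where B=H]) (use assms in \<open>auto simp: emeasure_lborel_Icc_eq\<close>)

lemma set_integral_abs_mono:
  assumes "0 \<le> s" "s \<le> t" "set_integrable lborel {0..t} (a::real\<Rightarrow>real)"
  shows "(LINT r:{0..s}|lborel. \<bar>a r\<bar>) \<le> (LINT r:{0..t}|lborel. \<bar>a r\<bar>)"
proof -
  have i: "set_integrable lborel {0..t} (\<lambda>r. \<bar>a r\<bar>)" using assms(3) by (rule set_integrable_abs)
  have i2: "set_integrable lborel {0..s} (\<lambda>r. \<bar>a r\<bar>)" by (rule set_integrable_subset[OF i]) (use assms in auto)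
  show ?thesis unfolding set_lebesgue_integral_def
    by (rule integral_mono) (use i i2 assms in \<open>auto simp: set_integrable_def indicator_def\<close>)
qed

lemma renewal:
  fixes f \<kappa> :: "real \<Rightarrow> real" and u :: "real \<Rightarrow> 'a::euclidean_space" and B :: "'a \<Rightarrow> 'a"
  assumes t: "0 \<le> t"
  and fm[measurable]: "f \<in> borel_measurable borel" and fi: "set_integrable lborel {0..t} f"
  and Fb: "\<And>x. x \<in> {0..t} \<Longrightarrow> \<bar>LINT s:{0..x}|lborel. f s\<bar> \<le> 1"
  and km[measurable]: "\<kappa> \<in> borel_measurable borel" and ki: "set_integrable lborel {0..t} \<kappa>"
  and Bl: "bounded_linear B"
  and eq: "AE \<tau> in lborel. \<tau> \<in> {0..t} \<longrightarrow> conv (\<lambda>x. 1 - (LINT s:{0..x}|lborel. f s)) \<kappa> \<tau> = f \<tau>"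
  and ucont: "continuous_on {0..} u"
  and ud: "\<And>\<tau>. \<tau> \<in> {0..t} \<Longrightarrow> (u has_vector_derivative conv \<kappa> (\<lambda>s. B (u s) - u s) \<tau>) (at \<tau> within {0..})"
  shows "u t = (1 - (LINT s:{0..t}|lborel. f s)) *\<^sub>R u 0 + conv f (\<lambda>s. B (u s)) t"
proof -
  define F where "F = (\<lambda>x. LINT s:{0..x}|lborel. f s)"
  have F_conv: "F x = conv f (\<lambda>_. 1) x" for x by (simp add: F_def conv_const)
  have Fm[measurable]: "F \<in> borel_measurable borel" unfolding F_conv[abs_def] by measurable
  define G where "G = (\<lambda>x. 1 - F x)"
  have Gm[measurable]: "G \<in> borel_measurable borel" unfolding G_def by measurable
  have Bc: "continuous_on UNIV B" using Bl by (simp add: linear_continuous_on)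
  have Bm[measurable]: "B \<in> borel_measurable borel" using Bc by (rule borel_measurable_continuous_onI)
  obtain K where K: "K > 0" "\<And>x. norm (B x) \<le> norm x * K" using bounded_linear.pos_bounded[OF Bl] by blast
  define uh where "uh = (\<lambda>s. indicator {0..} s *\<^sub>R u s)"
  have uhm[measurable]: "uh \<in> borel_measurable borel"
    unfolding uh_def by (rule borel_measurable_continuous_on_indicator) (auto intro: ucont)
  define ch where "ch = (\<lambda>s. B (uh s) - uh s)"
  have chm[measurable]: "ch \<in> borel_measurable borel" unfolding ch_def by measurable
  have "bounded (u ` {0..t})"
    by (rule compact_imp_bounded[OF compact_continuous_image[OF continuous_on_subset[OF ucont] compact_Icc]]) auto
  then obtain Hu where Hu: "Hu > 0" "\<And>s. s \<in> {0..t} \<Longrightarrow> norm (u s) \<le> Hu" by (auto simp: bounded_pos)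
  have uhb: "norm (uh s) \<le> Hu" if "s \<in> {0..t}" for s using Hu(2)[OF that] that by (simp add: uh_def)
  define Hc where "Hc = Hu * K + Hu"
  have Hc: "Hc \<ge> 0" using Hu K by (simp add: Hc_def)
  have chb: "norm (ch s) \<le> Hc" if "s \<in> {0..t}" for s
  proof -
    have "norm (ch s) \<le> norm (B (uh s)) + norm (uh s)" unfolding ch_def by (rule norm_triangle_ineq4)
    also have "\<dots> \<le> Hu * K + Hu" using K(2)[of "uh s"] uhb[OF that] K(1)
      by (smt (verit, best) mult_right_mono)
    finally show ?thesis by (simp add: Hc_def)
  qed
  define Ik where "Ik = (LINT r:{0..t}|lborel. \<bar>\<kappa> r\<bar>)"
  define W where "W = conv \<kappa> ch"
  have Wm[measurable]: "W \<in> borel_measurable borel" unfolding W_def by measurable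
  have Wb: "norm (W s) \<le> Hc * Ik" if "s \<in> {0..t}" for s
  proof -
    have "norm (W s) \<le> Hc * (LINT r:{0..s}|lborel. \<bar>\<kappa> r\<bar>)" unfolding W_def
      by (rule conv_bound) (use that chb in \<open>auto intro: set_integrable_subset[OF ki]\<close>)
    also have "\<dots> \<le> Hc * Ik" unfolding Ik_def
      by (rule mult_left_mono[OF set_integral_abs_mono[OF _ _ ki] Hc]) (use that in auto)
    finally show ?thesis .
  qed
  have Ik: "Ik \<ge> 0" unfolding Ik_def set_lebesgue_integral_def by (intro integral_nonneg_AE) auto
  have HW: "Hc * Ik \<ge> 0" using Hc Ik by simp
  have Wi: "set_integrable lborel {0..s} W" if "s \<in> {0..t}" for s
    by (rule set_integrable_bounded_Icc[OF Wm, where H="Hc * Ik"]) (use that Wb in auto)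
  have ftc: "conv (\<lambda>_. 1) W s = u s - u 0" if "s \<in> {0..t}" for s
  proof -
    have "conv (\<lambda>_. 1) W s = (LINT \<tau>:{0..s}|lborel. W \<tau>)" by (simp add: conv_def)
    also have "\<dots> = u s - u 0"
    proof (rule ftc_set)
      show "0 \<le> s" using that by simp
      show "set_integrable lborel {0..s} W" using that by (rule Wi)
      fix \<tau> assume \<tau>: "\<tau> \<in> {0..s}"
      then have \<tau>t: "\<tau> \<in> {0..t}" using that by auto
      have "conv \<kappa> (\<lambda>s. B (u s) - u s) \<tau> = W \<tau>" unfolding W_def
        by (rule conv_cong) (auto simp: ch_def uh_def)
      then show "(u has_vector_derivative W \<tau>) (at \<tau> within {0..})" using ud[OF \<tau>t] by simp
    qed
    finally show ?thesis .
  qed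
  have Fb': "norm (F x) \<le> 1" if "x \<in> {0..t}" for x using Fb[OF that] by (simp add: F_def)
  have Gb: "norm (G x) \<le> 2" if "x \<in> {0..t}" for x using Fb'[OF that] by (simp add: G_def)
  have Gi: "set_integrable lborel {0..t} G" by (rule set_integrable_bounded_Icc[OF Gm Gb])
  have Fi: "set_integrable lborel {0..t} F" by (rule set_integrable_bounded_Icc[OF Fm Fb'])
  have onei: "set_integrable lborel {0..t} (\<lambda>_. 1::real)" by (rule set_integrable_bounded_Icc[where H=1]) auto
  have pr: "Measurable.pred borel (\<lambda>\<tau>. 0 \<le> \<tau> \<and> \<tau> \<le> t \<longrightarrow> conv G \<kappa> \<tau> = f \<tau>)" by measurable
  have eq': "AE \<tau> in lborel. 0 \<le> \<tau> \<and> \<tau> \<le> t \<longrightarrow> conv G \<kappa> \<tau> = f \<tau>" using eq by (simp add: G_def F_def)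
  have "AE x in lborel. 0 \<le> (t + -1 * x) \<and> (t + -1 * x) \<le> t \<longrightarrow> conv G \<kappa> (t + -1 * x) = f (t + -1 * x)"
    by (rule AE_borel_affine[OF _ pr eq']) simp
  then have ae: "AE s in lborel. s \<in> {0..t} \<longrightarrow> f (t - s) = conv G \<kappa> (t - s)" by (rule AE_mp) (auto intro!: AE_I2)
  have s1: "conv f ch t = conv G W t"
  proof -
    have "conv f ch t = conv (conv G \<kappa>) ch t" by (rule conv_cong_AE[OF _ _ _ ae]) auto
    also have "\<dots> = conv G W t" unfolding W_def
      by (rule conv_assoc[OF _ _ _ Gi ki chb Hc]) auto
    finally show ?thesis .
  qed
  have s2: "conv G W t = conv (\<lambda>_. 1) W t - conv F W t" unfolding G_def
    by (rule conv_diff_left; rule conv_integrable[where H="Hc * Ik"]) (use onei Fi Wb in \<open>auto\<close>)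
  have s4: "conv F W t = conv f uh t - F t *\<^sub>R u 0"
  proof -
    have "conv F W t = conv (conv f (\<lambda>_. 1)) W t" by (rule conv_cong) (simp_all add: F_conv)
    also have "\<dots> = conv f (conv (\<lambda>_. 1) W) t"
      by (rule conv_assoc[OF _ _ _ fi onei Wb HW]) auto
    also have "\<dots> = conv f (\<lambda>s. uh s - u 0) t"
      by (rule conv_cong) (auto simp: ftc uh_def)
    also have "\<dots> = conv f uh t - conv f (\<lambda>_. u 0) t"
      by (rule conv_diff; rule conv_integrable[OF _ _ fi]) (use uhb in \<open>auto\<close>)
    also have "conv f (\<lambda>_. u 0) t = F t *\<^sub>R u 0" by (simp add: conv_const F_def)
    finally show ?thesis .
  qed
  have s5: "conv f (\<lambda>s. B (uh s)) t = conv f ch t + conv f uh t"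
  proof -
    have "conv f (\<lambda>s. B (uh s)) t = conv f (\<lambda>s. ch s + uh s) t" by (simp add: ch_def)
    also have "\<dots> = conv f ch t + conv f uh t"
      by (rule conv_add; rule conv_integrable[OF _ _ fi]) (use uhb chb in \<open>auto\<close>)
    finally show ?thesis .
  qed
  have "conv f (\<lambda>s. B (u s)) t = conv f (\<lambda>s. B (uh s)) t" by (rule conv_cong) (auto simp: uh_def)
  also have "\<dots> = u t - (1 - F t) *\<^sub>R u 0"
    using s5 s1 s2 s4 ftc[of t] t by (simp add: algebra_simps)
  finally show ?thesis by (simp add: F_def)
qed



lemma cplx_scaleR: "r *\<^sub>R (z::complex) = of_real r * z"
  by (simp add: scaleR_conv_of_real)

lemma cmat_scale_real: "cmat_scale (of_real r) X = r *\<^sub>R X"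
  unfolding cmat_scale_def by (simp add: vec_eq_iff cplx_scaleR)

lemma cmat_scale_add: "cmat_scale c (X + Y) = cmat_scale c X + cmat_scale c Y"
  by (simp add: cmat_scale_def vec_eq_iff algebra_simps)

lemma cmat_scale_scaleR: "cmat_scale c (r *\<^sub>R X) = r *\<^sub>R cmat_scale c X"
  unfolding cmat_scale_def by (simp add: vec_eq_iff cplx_scaleR algebra_simps)

lemma bl_cmat_scale: "bounded_linear (cmat_scale c :: 'd::finite cmat \<Rightarrow> _)"
  by (rule linear_conv_bounded_linear[THEN iffD1], rule linearI) (simp_all add: cmat_scale_add cmat_scale_scaleR)

lemma bl_of_cmat_linear:
  assumes "cmat_linear (T :: 'd::finite cmat \<Rightarrow> _)" shows "bounded_linear T"
proof -
  have "T (r *\<^sub>R X) = r *\<^sub>R T X" for r X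
    using assms unfolding cmat_linear_def by (metis cmat_scale_real)
  then show ?thesis using assms unfolding cmat_linear_def
    by (intro linear_conv_bounded_linear[THEN iffD1] linearI) auto
qed

definition E :: "(nat \<Rightarrow> complex ^ 'd) \<Rightarrow> nat \<Rightarrow> nat \<Rightarrow> 'd::finite cmat \<Rightarrow> complex" where
  "E v i j Y = (\<Sum>a\<in>UNIV. cnj (v i $ a) * ((Y *v v j) $ a))"

lemma block_positive_E: "block_positive k X \<longleftrightarrow> (\<forall>v. nonneg_complex (\<Sum>i<k. \<Sum>j<k. E v i j (X i j)))"
  by (simp add: block_positive_def E_def)

lemma E_add: "E v i j (X + Y) = E v i j X + E v i j Y"
  by (simp add: E_def matrix_vector_mult_def sum.distrib algebra_simps sum_distrib_left)

lemma E_scaleR: "E v i j (r *\<^sub>R X) = of_real r * E v i j X"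
  unfolding E_def matrix_vector_mult_def by (simp add: cplx_scaleR sum_distrib_left algebra_simps)

lemma bl_E: "bounded_linear (E v i j)"
proof (rule linear_conv_bounded_linear[THEN iffD1], rule linearI)
  show "E v i j (r *\<^sub>R b) = r *\<^sub>R E v i j b" for r b by (simp only: E_scaleR) (simp add: cplx_scaleR)
qed (simp add: E_add)

lemma E_cont: "continuous_on UNIV (E v i j)"
  by (rule linear_continuous_on[OF bl_E])

lemma nonneg_complex_add: "nonneg_complex a \<Longrightarrow> nonneg_complex b \<Longrightarrow> nonneg_complex (a + b)"
  by (simp add: nonneg_complex_def)

lemma nonneg_complex_sum: "(\<And>i. i \<in> I \<Longrightarrow> nonneg_complex (a i)) \<Longrightarrow> nonneg_complex (\<Sum>i\<in>I. a i)"
  by (induction I rule: infinite_finite_induct) (auto simp: nonneg_complex_def intro: nonneg_complex_add)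

lemma nonneg_complex_scale: "0 \<le> r \<Longrightarrow> nonneg_complex a \<Longrightarrow> nonneg_complex (of_real r * a)"
  by (simp add: nonneg_complex_def)

lemma cp_comp: "completely_positive S \<Longrightarrow> completely_positive T \<Longrightarrow> completely_positive (\<lambda>X. S (T X))"
  unfolding completely_positive_def cmat_linear_def by auto

lemma cp_id: "completely_positive (\<lambda>X. X)"
  unfolding completely_positive_def cmat_linear_def by auto

lemma E_tendsto:
  fixes L :: "'d::finite cmat \<Rightarrow> 'd cmat"
  assumes "\<And>X. (\<lambda>n. H n X) \<longlonglongrightarrow> L X"
  shows "(\<lambda>n. \<Sum>i<k. \<Sum>j<k. E v i j (H n (X i j))) \<longlonglongrightarrow> (\<Sum>i<k. \<Sum>j<k. E v i j (L (X i j)))"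
  by (intro tendsto_sum continuous_on_tendsto_compose[OF E_cont assms]) auto

lemma cp_limit:
  fixes L :: "'d::finite cmat \<Rightarrow> 'd cmat"
  assumes cp: "\<And>n. completely_positive (H n)" and lim: "\<And>X. (\<lambda>n. H n X) \<longlonglongrightarrow> L X"
  and lin: "cmat_linear L"
  shows "completely_positive L"
  unfolding completely_positive_def
proof (intro conjI lin allI impI)
  fix k and X :: "nat \<Rightarrow> nat \<Rightarrow> 'd cmat" assume bp: "block_positive k X"
  show "block_positive k (\<lambda>i j. L (X i j))" unfolding block_positive_E
  proof
    fix v
    let ?s = "\<lambda>n. \<Sum>i<k. \<Sum>j<k. E v i j (H n (X i j))"
    have nn: "nonneg_complex (?s n)" for n
    proof -
      have "block_positive k (\<lambda>i j. H n (X i j))" using cp[of n] bp unfolding completely_positive_def by blast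
      then show ?thesis unfolding block_positive_E by blast
    qed
    have l: "?s \<longlonglongrightarrow> (\<Sum>i<k. \<Sum>j<k. E v i j (L (X i j)))" by (rule E_tendsto[OF lim])
    have "(\<lambda>n. Im (?s n)) \<longlonglongrightarrow> Im (\<Sum>i<k. \<Sum>j<k. E v i j (L (X i j)))" by (rule tendsto_Im[OF l])
    moreover have "(\<lambda>n. Im (?s n)) = (\<lambda>n. 0)" using nn by (simp add: nonneg_complex_def)
    ultimately have "Im (\<Sum>i<k. \<Sum>j<k. E v i j (L (X i j))) = 0" using LIMSEQ_unique[of "\<lambda>n. 0::real"] by auto
    moreover have "0 \<le> Re (\<Sum>i<k. \<Sum>j<k. E v i j (L (X i j)))"
      by (rule LIMSEQ_le_const[OF tendsto_Re[OF l]]) (use nn in \<open>auto simp: nonneg_complex_def\<close>)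
    ultimately show "nonneg_complex (\<Sum>i<k. \<Sum>j<k. E v i j (L (X i j)))" by (simp add: nonneg_complex_def)
  qed
qed




fun Hit :: "(real \<Rightarrow> real) \<Rightarrow> ('d::finite cmat \<Rightarrow> 'd cmat) \<Rightarrow> nat \<Rightarrow> real \<Rightarrow> 'd cmat \<Rightarrow> 'd cmat" where
  "Hit f B 0 t X = X"
| "Hit f B (Suc k) t X = (1 - (LINT s:{0..t}|lborel. f s)) *\<^sub>R X + conv f (\<lambda>s. B (Hit f B k s X)) t"

lemma conv_bounded_linear:
  assumes T: "bounded_linear T" and i: "set_integrable lborel {0..t} (\<lambda>s. a (t - s) *\<^sub>R h s)"
  shows "T (conv a h t) = conv a (\<lambda>s. T (h s)) t"
proof -
  interpret T: bounded_linear T by fact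
  have "T (conv a h t) = (\<integral>x. T (indicator {0..t} x *\<^sub>R (a (t - x) *\<^sub>R h x)) \<partial>lborel)"
    unfolding conv_def set_lebesgue_integral_def
    by (rule integral_bounded_linear[OF T i[unfolded set_integrable_def], symmetric])
  also have "\<dots> = conv a (\<lambda>s. T (h s)) t"
    unfolding conv_def set_lebesgue_integral_def by (simp add: T.scaleR)
  finally show ?thesis .
qed

lemma conv_sum:
  assumes "finite I" "\<And>i. i \<in> I \<Longrightarrow> set_integrable lborel {0..t} (\<lambda>s. a (t - s) *\<^sub>R h i s)"
  shows "conv a (\<lambda>s. \<Sum>i\<in>I. h i s) t = (\<Sum>i\<in>I. conv a (h i) t)"
  using assms
proof (induction I rule: finite_induct)
  case empty then show ?case by (simp add: conv_def)
next
  case (insert x F)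
  have "conv a (\<lambda>s. \<Sum>i\<in>insert x F. h i s) t = conv a (\<lambda>s. h x s + (\<Sum>i\<in>F. h i s)) t"
    using insert by simp
  also have "\<dots> = conv a (h x) t + conv a (\<lambda>s. \<Sum>i\<in>F. h i s) t"
  proof (rule conv_add)
    show "set_integrable lborel {0..t} (\<lambda>s. a (t - s) *\<^sub>R h x s)" using insert by auto
    have "integrable lborel (\<lambda>s. \<Sum>i\<in>F. indicator {0..t} s *\<^sub>R (a (t - s) *\<^sub>R h i s))"
      using insert by (intro Bochner_Integration.integrable_sum) (auto simp: set_integrable_def)
    then show "set_integrable lborel {0..t} (\<lambda>s. a (t - s) *\<^sub>R (\<Sum>i\<in>F. h i s))"
      unfolding set_integrable_def by (simp add: scaleR_sum_right)
  qed
  finally show ?case using insert by simp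
qed

lemma conv_nonneg_complex:
  fixes h :: "real \<Rightarrow> complex"
  assumes "\<And>x. 0 \<le> a x" "\<And>s. s \<in> {0..t} \<Longrightarrow> nonneg_complex (h s)"
  and i: "set_integrable lborel {0..t} (\<lambda>s. a (t - s) *\<^sub>R h s)"
  shows "nonneg_complex (conv a h t)"
proof -
  have "Re (conv a h t) = conv a (\<lambda>s. Re (h s)) t" by (rule conv_bounded_linear[OF bounded_linear_Re i])
  also have "\<dots> \<ge> 0" unfolding conv_def set_lebesgue_integral_def
    using assms by (intro integral_nonneg_AE AE_I2) (auto simp: nonneg_complex_def indicator_def)
  finally have 1: "Re (conv a h t) \<ge> 0" .
  have "Im (conv a h t) = conv a (\<lambda>s. Im (h s)) t" by (rule conv_bounded_linear[OF bounded_linear_Im i])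
  also have "\<dots> = conv a (\<lambda>s. 0) t" by (rule conv_cong) (use assms in \<open>auto simp: nonneg_complex_def\<close>)
  finally have "Im (conv a h t) = 0" by (simp add: conv_def)
  with 1 show ?thesis by (simp add: nonneg_complex_def)
qed




lemma set_integrable_bl:
  assumes T: "bounded_linear T" and i: "set_integrable lborel {0..t} (\<lambda>s. a (t - s) *\<^sub>R h s)"
  shows "set_integrable lborel {0..t} (\<lambda>s. a (t - s) *\<^sub>R T (h s))"
proof -
  interpret T: bounded_linear T by fact
  have "integrable lborel (\<lambda>x. T (indicator {0..t} x *\<^sub>R (a (t - x) *\<^sub>R h x)))"
    by (rule integrable_bounded_linear[OF T i[unfolded set_integrable_def]])
  then show ?thesis unfolding set_integrable_def by (simp add: T.scaleR)
qed

lemma set_integrable_sum':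
  assumes "\<And>i. i \<in> I \<Longrightarrow> set_integrable lborel {0..t} (\<lambda>s. a (t - s) *\<^sub>R h i s)"
  shows "set_integrable lborel {0..t} (\<lambda>s. a (t - s) *\<^sub>R (\<Sum>i\<in>I. h i s))"
proof -
  have "integrable lborel (\<lambda>s. \<Sum>i\<in>I. indicator {0..t} s *\<^sub>R (a (t - s) *\<^sub>R h i s))"
    using assms by (intro Bochner_Integration.integrable_sum) (auto simp: set_integrable_def)
  then show ?thesis unfolding set_integrable_def by (simp add: scaleR_sum_right)
qed

lemma exists_lambda:
  fixes f :: "real \<Rightarrow> real"
  assumes fm[measurable]: "f \<in> borel_measurable borel" and fnn: "\<And>x. 0 \<le> f x"
  and fi: "set_integrable lborel {0..T} f" and K: "K > 0"
  shows "\<exists>l>0. K * (LINT r:{0..T}|lborel. f r * exp (- (l * r))) \<le> 1/2"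
proof -
  define s where "s = (\<lambda>(n::nat) r. indicator {0..T} r *\<^sub>R (f r * exp (- real n * r)))"
  have w: "integrable lborel (\<lambda>r. indicator {0..T} r *\<^sub>R f r)" using fi by (simp add: set_integrable_def)
  have m0: "(\<lambda>r. 0::real) \<in> borel_measurable lborel" by simp
  have ms: "\<And>n. s n \<in> borel_measurable lborel" unfolding s_def by measurable
  have bnd: "\<And>n. AE x in lborel. norm (s n x) \<le> indicator {0..T} x *\<^sub>R f x"
  proof (rule AE_I2)
    fix n x
    show "norm (s n x) \<le> indicator {0..T} x *\<^sub>R f x"
    proof (cases "x \<in> {0..T}")
      case True
      then have "exp (- real n * x) \<le> 1" by simp
      then show ?thesis using True fnn[of x] by (simp add: s_def abs_mult mult_left_le)
    qed (simp add: s_def)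
  qed
  have ae: "AE x in lborel. (\<lambda>n. s n x) \<longlonglongrightarrow> 0"
  proof (rule AE_mp[OF AE_lborel_singleton[of 0]], rule AE_I2, intro impI)
    fix x :: real assume "x \<noteq> 0"
    show "(\<lambda>n. s n x) \<longlonglongrightarrow> 0"
    proof (cases "x \<in> {0..T}")
      case True
      with \<open>x \<noteq> 0\<close> have x: "x > 0" by auto
      have e: "exp (- (real n * x)) = exp (- x) ^ n" for n
        using exp_of_nat_mult[of n "-x"] by simp
      have "(\<lambda>n. exp (- x) ^ n) \<longlonglongrightarrow> 0" by (rule LIMSEQ_power_zero) (use x in simp)
      then have "(\<lambda>n. f x * exp (- x) ^ n) \<longlonglongrightarrow> f x * 0" by (intro tendsto_mult tendsto_const)
      then show ?thesis using True by (simp add: s_def e)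
    qed (simp add: s_def)
  qed
  have lim: "(\<lambda>n. integral\<^sup>L lborel (s n)) \<longlonglongrightarrow> integral\<^sup>L lborel (\<lambda>r. 0::real)"
    using Bochner_Integration.integral_dominated_convergence[OF m0 ms w _ bnd] ae by simp
  then have "(\<lambda>n. K * integral\<^sup>L lborel (s n)) \<longlonglongrightarrow> K * 0" by (intro tendsto_mult tendsto_const) simp
  then have "eventually (\<lambda>n. K * integral\<^sup>L lborel (s n) < 1/2) sequentially"
    by (rule order_tendstoD) simp
  then obtain N where N: "\<And>n. n \<ge> N \<Longrightarrow> K * integral\<^sup>L lborel (s n) < 1/2" by (auto simp: eventually_sequentially)
  show ?thesis
  proof (intro exI conjI)
    show "real (Suc N) > 0" by simp
    have "K * integral\<^sup>L lborel (s (Suc N)) < 1/2" by (rule N) simp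
    then show "K * (LINT r:{0..T}|lborel. f r * exp (- (real (Suc N) * r))) \<le> 1/2"
      by (simp add: s_def set_lebesgue_integral_def)
  qed
qed




context
  fixes f :: "real \<Rightarrow> real" and B :: "'d::finite cmat \<Rightarrow> 'd cmat"
  assumes fm[measurable]: "f \<in> borel_measurable borel" and fnn: "\<And>x. 0 \<le> f x"
    and fi: "\<And>T. set_integrable lborel {0..T} f" and F1: "\<And>T. (LINT s:{0..T}|lborel. f s) \<le> 1"
    and Bcp: "completely_positive B" and Bu: "B (mat 1) = mat 1"
begin

lemma F_nonneg: "0 \<le> (LINT s:{0..T}|lborel. f s)"
  unfolding set_lebesgue_integral_def by (intro integral_nonneg_AE AE_I2) (simp add: fnn)

lemma F_conv: "(LINT s:{0..T}|lborel. f s) = conv f (\<lambda>_. 1) T"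
  by (simp add: conv_const)

lemma F_meas[measurable]: "(\<lambda>t. LINT s:{0..t}|lborel. f s) \<in> borel_measurable borel"
  unfolding F_conv by measurable

lemma Bbl: "bounded_linear B"
  using Bcp by (simp add: completely_positive_def bl_of_cmat_linear)

lemma Bm[measurable]: "B \<in> borel_measurable borel"
  by (rule borel_measurable_continuous_onI) (simp add: Bbl linear_continuous_on)

lemma Kex: "\<exists>K>0. \<forall>x. norm (B x) \<le> norm x * K"
  using bounded_linear.pos_bounded[OF Bbl] by blast

lemma Hit_meas[measurable]: "(\<lambda>s. Hit f B k s X) \<in> borel_measurable borel"
proof (induction k arbitrary: X)
  case 0 then show ?case by simp
next
  case (Suc k)
  have [measurable]: "(\<lambda>s. Hit f B k s Y) \<in> borel_measurable borel" for Y by (rule Suc.IH)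
  show ?case by simp
qed

lemma Hit_bound: "\<exists>M\<ge>0. \<forall>s\<in>{0..T}. norm (Hit f B k s X) \<le> M"
proof (induction k arbitrary: X)
  case 0 then show ?case by (intro exI[of _ "norm X"]) auto
next
  case (Suc k)
  obtain M where M: "M \<ge> 0" "\<And>s. s \<in> {0..T} \<Longrightarrow> norm (Hit f B k s X) \<le> M" using Suc.IH by blast
  obtain K where K: "K > 0" "\<And>x. norm (B x) \<le> norm x * K" using Kex by blast
  show ?case
  proof (intro exI[of _ "norm X + M * K"] conjI ballI)
    show "0 \<le> norm X + M * K" using M K by simp
    fix s assume s: "s \<in> {0..T}"
    have Bb: "norm (B (Hit f B k r X)) \<le> M * K" if "r \<in> {0..s}" for r
    proof -
      have "norm (Hit f B k r X) \<le> M" using that s by (intro M(2)) auto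
      then show ?thesis using K(2)[of "Hit f B k r X"] K(1) by (smt (verit) mult_right_mono)
    qed
    have "norm (conv f (\<lambda>r. B (Hit f B k r X)) s) \<le> (M * K) * (LINT r:{0..s}|lborel. \<bar>f r\<bar>)"
      by (rule conv_bound[OF _ _ fi Bb]) auto
    also have "(LINT r:{0..s}|lborel. \<bar>f r\<bar>) = (LINT r:{0..s}|lborel. f r)" using fnn by simp
    also have "(M * K) * \<dots> \<le> M * K" using F1[of s] M K by (simp add: mult_left_le)
    finally have c: "norm (conv f (\<lambda>r. B (Hit f B k r X)) s) \<le> M * K" .
    have "norm ((1 - (LINT r:{0..s}|lborel. f r)) *\<^sub>R X) \<le> norm X"
      using F1[of s] F_nonneg[of s] by (simp add: mult_left_le_one_le)
    then show "norm (Hit f B (Suc k) s X) \<le> norm X + M * K"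
      using c by (simp add: norm_triangle_le)
  qed
qed

lemma Hit_int: "set_integrable lborel {0..t} (\<lambda>s. f (t - s) *\<^sub>R B (Hit f B k s X))"
proof -
  obtain M where M: "M \<ge> 0" "\<And>s. s \<in> {0..t} \<Longrightarrow> norm (Hit f B k s X) \<le> M" using Hit_bound by blast
  obtain K where K: "K > 0" "\<And>x. norm (B x) \<le> norm x * K" using Kex by blast
  show ?thesis
  proof (rule conv_integrable[OF _ _ fi, where H="M * K"])
    fix s assume "s \<in> {0..t}"
    then have "norm (Hit f B k s X) \<le> M" by (rule M(2))
    then show "norm (B (Hit f B k s X)) \<le> M * K" using K(2)[of "Hit f B k s X"] K(1) by (smt (verit) mult_right_mono)
  qed auto
qed

lemma Hit_unit: "0 \<le> t \<Longrightarrow> Hit f B k t (mat 1) = mat 1"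
proof (induction k arbitrary: t)
  case 0 then show ?case by simp
next
  case (Suc k)
  have "conv f (\<lambda>s. B (Hit f B k s (mat 1))) t = conv f (\<lambda>_. mat 1) t"
    by (rule conv_cong) (auto simp: Suc.IH Bu)
  also have "\<dots> = (LINT s:{0..t}|lborel. f s) *\<^sub>R mat 1" by (rule conv_const)
  finally show ?case by (simp add: algebra_simps)
qed

lemma Hit_cp: "0 \<le> t \<Longrightarrow> completely_positive (Hit f B k t)"
proof (induction k arbitrary: t)
  case 0 then show ?case by (simp add: cp_id[unfolded fun_eq_iff] completely_positive_def cmat_linear_def)
next
  case (Suc k)
  let ?F = "LINT s:{0..t}|lborel. f s"
  have lin: "cmat_linear (Hit f B k s)" if "s \<in> {0..t}" for s
    using Suc.IH[of s] that by (simp add: completely_positive_def)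
  have Blin: "cmat_linear B" using Bcp by (simp add: completely_positive_def)
  have "cmat_linear (Hit f B (Suc k) t)"
    unfolding cmat_linear_def
  proof (intro conjI allI)
    fix X Y
    have "conv f (\<lambda>s. B (Hit f B k s (X + Y))) t = conv f (\<lambda>s. B (Hit f B k s X) + B (Hit f B k s Y)) t"
      by (rule conv_cong) (use lin Blin in \<open>auto simp: cmat_linear_def\<close>)
    also have "\<dots> = conv f (\<lambda>s. B (Hit f B k s X)) t + conv f (\<lambda>s. B (Hit f B k s Y)) t"
      by (rule conv_add[OF Hit_int Hit_int])
    finally show "Hit f B (Suc k) t (X + Y) = Hit f B (Suc k) t X + Hit f B (Suc k) t Y"
      by (simp add: algebra_simps)
  next
    fix c X
    have "conv f (\<lambda>s. B (Hit f B k s (cmat_scale c X))) t = conv f (\<lambda>s. cmat_scale c (B (Hit f B k s X))) t"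
      by (rule conv_cong) (use lin Blin in \<open>auto simp: cmat_linear_def\<close>)
    also have "\<dots> = cmat_scale c (conv f (\<lambda>s. B (Hit f B k s X)) t)"
      by (rule conv_bounded_linear[OF bl_cmat_scale Hit_int, symmetric])
    finally show "Hit f B (Suc k) t (cmat_scale c X) = cmat_scale c (Hit f B (Suc k) t X)"
      by (simp add: cmat_scale_add cmat_scale_scaleR)
  qed
  moreover have "block_positive n (\<lambda>i j. Hit f B (Suc k) t (Xs i j))" if bp: "block_positive n Xs" for n Xs
    unfolding block_positive_E
  proof
    fix v
    define I where "I = {..<n} \<times> {..<n}"
    have fI: "finite I" by (simp add: I_def)
    have ss: "(\<Sum>i<n. \<Sum>j<n. g i j) = (\<Sum>p\<in>I. g (fst p) (snd p))" for g :: "nat \<Rightarrow> nat \<Rightarrow> complex"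
      unfolding I_def by (simp add: sum.cartesian_product case_prod_beta)
    have eq1: "E v i j (Hit f B (Suc k) t Y) = of_real (1 - ?F) * E v i j Y + conv f (\<lambda>s. E v i j (B (Hit f B k s Y))) t" for i j Y
    proof -
      have "E v i j (conv f (\<lambda>s. B (Hit f B k s Y)) t) = conv f (\<lambda>s. E v i j (B (Hit f B k s Y))) t"
        by (rule conv_bounded_linear[OF bl_E Hit_int])
      then show ?thesis by (simp add: E_add E_scaleR)
    qed
    have ints: "set_integrable lborel {0..t} (\<lambda>s. f (t - s) *\<^sub>R E v (fst p) (snd p) (B (Hit f B k s (Xs (fst p) (snd p)))))" for p
      by (rule set_integrable_bl[OF bl_E Hit_int])
    define C where "C = (\<lambda>i j. conv f (\<lambda>s. E v i j (B (Hit f B k s (Xs i j)))) t)"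
    have d1: "(\<Sum>i<n. \<Sum>j<n. E v i j (Hit f B (Suc k) t (Xs i j)))
        = (\<Sum>i<n. \<Sum>j<n. of_real (1 - ?F) * E v i j (Xs i j) + C i j)"
      by (simp only: eq1 C_def)
    have d2: "(\<Sum>i<n. \<Sum>j<n. of_real (1 - ?F) * E v i j (Xs i j) + C i j) = of_real (1 - ?F) * (\<Sum>i<n. \<Sum>j<n. E v i j (Xs i j)) + (\<Sum>i<n. \<Sum>j<n. C i j)"
      by (simp only: sum.distrib sum_distrib_left)
    have d3: "(\<Sum>i<n. \<Sum>j<n. C i j) = (\<Sum>p\<in>I. C (fst p) (snd p))" by (rule ss)
    have d4: "(\<Sum>p\<in>I. C (fst p) (snd p)) = conv f (\<lambda>s. \<Sum>p\<in>I. E v (fst p) (snd p) (B (Hit f B k s (Xs (fst p) (snd p))))) t"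
      unfolding C_def by (rule conv_sum[OF fI ints, symmetric])
    have decomp: "(\<Sum>i<n. \<Sum>j<n. E v i j (Hit f B (Suc k) t (Xs i j)))
        = of_real (1 - ?F) * (\<Sum>i<n. \<Sum>j<n. E v i j (Xs i j)) + conv f (\<lambda>s. \<Sum>p\<in>I. E v (fst p) (snd p) (B (Hit f B k s (Xs (fst p) (snd p))))) t"
      by (simp only: d1 d2 d3 d4)
    have n1: "nonneg_complex (of_real (1 - ?F) * (\<Sum>i<n. \<Sum>j<n. E v i j (Xs i j)))"
      using bp F1[of t] by (intro nonneg_complex_scale) (auto simp: block_positive_E)
    have n2: "nonneg_complex (conv f (\<lambda>s. \<Sum>p\<in>I. E v (fst p) (snd p) (B (Hit f B k s (Xs (fst p) (snd p))))) t)"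
    proof (rule conv_nonneg_complex[OF fnn])
      show "set_integrable lborel {0..t} (\<lambda>s. f (t - s) *\<^sub>R (\<Sum>p\<in>I. E v (fst p) (snd p) (B (Hit f B k s (Xs (fst p) (snd p))))))"
        by (rule set_integrable_sum'[OF ints])
      fix s assume s: "s \<in> {0..t}"
      have "completely_positive (\<lambda>X. B (Hit f B k s X))" by (rule cp_comp[OF Bcp Suc.IH]) (use s in auto)
      then have "block_positive n (\<lambda>i j. B (Hit f B k s (Xs i j)))" using bp by (simp add: completely_positive_def)
      then have "nonneg_complex (\<Sum>i<n. \<Sum>j<n. E v i j (B (Hit f B k s (Xs i j))))"
        unfolding block_positive_E by blast
      then show "nonneg_complex (\<Sum>p\<in>I. E v (fst p) (snd p) (B (Hit f B k s (Xs (fst p) (snd p)))))"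
        by (simp only: ss[of "\<lambda>i j. E v i j (B (Hit f B k s (Xs i j)))"])
    qed
    show "nonneg_complex (\<Sum>i<n. \<Sum>j<n. E v i j (Hit f B (Suc k) t (Xs i j)))"
      unfolding decomp by (rule nonneg_complex_add[OF n1 n2])
  qed
  ultimately show ?case unfolding completely_positive_def by blast
qed

lemma Hit_lim:
  fixes u :: "real \<Rightarrow> 'd cmat"
  assumes ucont: "continuous_on {0..} u"
  and ren: "\<And>t. 0 \<le> t \<Longrightarrow> u t = (1 - (LINT s:{0..t}|lborel. f s)) *\<^sub>R u 0 + conv f (\<lambda>s. B (u s)) t"
  and T: "0 \<le> T"
  shows "(\<lambda>k. Hit f B k T (u 0)) \<longlonglongrightarrow> u T"
proof -
  define X where "X = u 0"
  define uh where "uh = (\<lambda>s. indicator {0..} s *\<^sub>R u s)"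
  have uhm[measurable]: "uh \<in> borel_measurable borel"
    unfolding uh_def by (rule borel_measurable_continuous_on_indicator) (auto intro: ucont)
  obtain K where K: "K > 0" "\<And>x. norm (B x) \<le> norm x * K" using Kex by blast
  interpret Bl: bounded_linear B by (rule Bbl)
  obtain l where l: "l > 0" "K * (LINT r:{0..T}|lborel. f r * exp (- (l * r))) \<le> 1/2"
    using exists_lambda[OF fm fnn fi K(1)] by blast
  define J where "J = (LINT r:{0..T}|lborel. f r * exp (- (l * r)))"
  have "bounded ((\<lambda>s. u s - X) ` {0..T})"
    by (rule compact_imp_bounded[OF compact_continuous_image])
       (auto intro!: continuous_intros continuous_on_subset[OF ucont])
  then obtain N where N: "N > 0" "\<And>s. s \<in> {0..T} \<Longrightarrow> norm (u s - X) \<le> N" by (auto simp: bounded_pos)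
  define Mu where "Mu = N + norm X"
  have uhb: "norm (uh s) \<le> Mu" if "s \<in> {0..T}" for s
  proof -
    have "norm (u s) \<le> norm (u s - X) + norm X" using norm_triangle_ineq[of "u s - X" X] by simp
    then show ?thesis using N(2)[OF that] that by (simp add: uh_def Mu_def)
  qed
  have Buhb: "norm (B (uh s)) \<le> Mu * K" if "s \<in> {0..T}" for s
    using K(2)[of "uh s"] uhb[OF that] K(1) by (smt (verit) mult_right_mono)
  have phi_int: "set_integrable lborel {0..T} (\<lambda>r. f r * exp (- (l * r)))"
    unfolding set_integrable_def
  proof (rule Bochner_Integration.integrable_bound[OF fi[of T, unfolded set_integrable_def]])
    show "(\<lambda>x. indicat_real {0..T} x *\<^sub>R (f x * exp (- (l * x)))) \<in> borel_measurable lborel" by measurable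
    show "AE x in lborel. norm (indicat_real {0..T} x *\<^sub>R (f x * exp (- (l * x)))) \<le> norm (indicat_real {0..T} x *\<^sub>R f x)"
    proof (rule AE_I2)
      fix x show "norm (indicat_real {0..T} x *\<^sub>R (f x * exp (- (l * x)))) \<le> norm (indicat_real {0..T} x *\<^sub>R f x)"
      proof (cases "x \<in> {0..T}")
        case True
        then have "exp (- (l * x)) \<le> 1" using l by simp
        then show ?thesis using True fnn[of x] by (simp add: abs_mult mult_left_le)
      qed simp
    qed
  qed
  define D where "D = (\<lambda>k s. uh s - Hit f B k s X)"
  have Dm[measurable]: "D k \<in> borel_measurable borel" for k unfolding D_def by measurable
  have claim: "\<forall>s\<in>{0..T}. norm (D k s) \<le> N * (1/2)^k * exp (l * s)" for k
  proof (induction k)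
    case 0
    show ?case
    proof
      fix s assume s: "s \<in> {0..T}"
      have "1 \<le> exp (l * s)" using s l by simp
      then have "N \<le> N * exp (l * s)" using N by simp
      then show "norm (D 0 s) \<le> N * (1/2)^0 * exp (l * s)" using N(2)[OF s] s by (simp add: D_def uh_def X_def)
    qed
  next
    case (Suc k)
    show ?case
    proof
      fix t assume t: "t \<in> {0..T}"
      define C where "C = K * (N * (1/2)^k)"
      have C: "C \<ge> 0" using K N by (simp add: C_def)
      have Hk_int: "set_integrable lborel {0..t} (\<lambda>s. f (t - s) *\<^sub>R B (Hit f B k s X))" by (rule Hit_int)
      have uh_int: "set_integrable lborel {0..t} (\<lambda>s. f (t - s) *\<^sub>R B (uh s))"
        by (rule conv_integrable[OF _ _ fi, where H="Mu * K"]) (use t Buhb in auto)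
      have "D (Suc k) t = conv f (\<lambda>s. B (u s)) t - conv f (\<lambda>s. B (Hit f B k s X)) t"
        using ren[of t] t by (simp add: D_def uh_def X_def)
      also have "conv f (\<lambda>s. B (u s)) t = conv f (\<lambda>s. B (uh s)) t"
        by (rule conv_cong) (auto simp: uh_def)
      also have "conv f (\<lambda>s. B (uh s)) t - conv f (\<lambda>s. B (Hit f B k s X)) t = conv f (\<lambda>s. B (uh s) - B (Hit f B k s X)) t"
        by (rule conv_diff[OF uh_int Hk_int, symmetric])
      also have "\<dots> = conv f (\<lambda>s. B (D k s)) t"
        by (simp add: D_def Bl.diff)
      finally have De: "D (Suc k) t = conv f (\<lambda>s. B (D k s)) t" .
      have "norm (D (Suc k) t) \<le> (LINT s:{0..t}|lborel. \<bar>f (t - s)\<bar> * (C * exp (l * s)))"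
        unfolding De
      proof (rule conv_norm_le[OF _ _ _ fi, where H="C * exp (l * T)"])
        fix s assume s: "s \<in> {0..t}"
        then have sT: "s \<in> {0..T}" using t by auto
        have "norm (B (D k s)) \<le> norm (D k s) * K" by (rule K(2))
        also have "\<dots> \<le> (N * (1/2)^k * exp (l * s)) * K" using Suc.IH sT K(1) by (intro mult_right_mono) auto
        finally show "norm (B (D k s)) \<le> C * exp (l * s)" by (simp add: C_def mult_ac)
        show "C * exp (l * s) \<le> C * exp (l * T)" using C sT l by (intro mult_left_mono) auto
      qed auto
      also have "(LINT s:{0..t}|lborel. \<bar>f (t - s)\<bar> * (C * exp (l * s)))
          = (LINT s:{0..t}|lborel. (C * exp (l * t)) * (f (t - s) * exp (- (l * (t - s)))))"
      proof (rule set_lebesgue_integral_cong, simp, intro allI impI)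
        fix s
        have "exp (l * s) = exp (l * t) * exp (- (l * (t - s)))" by (simp add: exp_add[symmetric] algebra_simps)
        then show "\<bar>f (t - s)\<bar> * (C * exp (l * s)) = (C * exp (l * t)) * (f (t - s) * exp (- (l * (t - s))))"
          using fnn[of "t - s"] by simp
      qed
      also have "\<dots> = (C * exp (l * t)) * (LINT s:{0..t}|lborel. f (t - s) * exp (- (l * (t - s))))"
        by (rule set_integral_mult_right)
      also have "(LINT s:{0..t}|lborel. f (t - s) * exp (- (l * (t - s)))) = (LINT r:{0..t}|lborel. f r * exp (- (l * r)))"
        by (rule refl_int[where a="\<lambda>r. f r * exp (- (l * r))"])
      also have "\<dots> \<le> J"
      proof -
        have "(LINT r:{0..t}|lborel. \<bar>f r * exp (- (l * r))\<bar>) \<le> (LINT r:{0..T}|lborel. \<bar>f r * exp (- (l * r))\<bar>)"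
          by (rule set_integral_abs_mono[OF _ _ phi_int]) (use t in auto)
        moreover have "\<bar>f r * exp (- (l * r))\<bar> = f r * exp (- (l * r))" for r using fnn[of r] by simp
        ultimately show ?thesis by (simp add: J_def)
      qed
      finally have "norm (D (Suc k) t) \<le> (C * exp (l * t)) * J"
        using C by (simp add: mult_left_mono)
      also have "(C * exp (l * t)) * J = N * (1/2)^k * exp (l * t) * (K * J)" by (simp add: C_def mult_ac)
      also have "\<dots> \<le> N * (1/2)^k * exp (l * t) * (1/2)"
        using l(2) N by (intro mult_left_mono) (auto simp: J_def)
      finally show "norm (D (Suc k) t) \<le> N * (1/2)^(Suc k) * exp (l * t)" by (simp add: mult_ac)
    qed
  qed
  have "(\<lambda>k. Hit f B k T X - u T) \<longlonglongrightarrow> 0"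
  proof (rule Lim_null_comparison)
    show "\<forall>\<^sub>F k in sequentially. norm (Hit f B k T X - u T) \<le> N * exp (l * T) * (1/2)^k"
    proof (intro always_eventually allI)
      fix k
      have "norm (D k T) \<le> N * (1/2)^k * exp (l * T)" using claim[of k] T by auto
      then show "norm (Hit f B k T X - u T) \<le> N * exp (l * T) * (1/2)^k"
        using T by (simp add: D_def uh_def norm_minus_commute mult_ac)
    qed
    show "(\<lambda>k. N * exp (l * T) * (1/2::real)^k) \<longlonglongrightarrow> 0"
      by (rule tendsto_mult_right_zero) (rule LIMSEQ_power_zero, simp)
  qed
  then show ?thesis unfolding X_def by (simp add: Lim_null[symmetric])
qed

end



theorem corollary1:
  fixes f g \<kappa> :: "real \<Rightarrow> real"
    and B :: "'d::finite cmat \<Rightarrow> 'd cmat"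
    and A :: "real \<Rightarrow> 'd cmat \<Rightarrow> 'd cmat"
  assumes f_meas: "set_borel_measurable lborel {0..} f"
    and f_nonneg: "\<forall>t\<ge>0. f t \<ge> 0"
    and f_int: "(\<integral>\<^sup>+ s\<in>{0..}. ennreal (f s) \<partial>lborel) \<le> 1"
    and g_def: "\<forall>t\<ge>0. g t = 1 - (LBINT s:{0..t}. f s)"
    and \<kappa>_loc_int: "\<forall>t\<ge>0. set_integrable lborel {0..t} \<kappa>"
    and \<kappa>_eq: "AE t in lborel. t \<ge> 0 \<longrightarrow> (LBINT s:{0..t}. g (t - s) * \<kappa> s) = f t"
    and B_cp: "completely_positive B"
    and B_unital: "B (mat 1) = mat 1"
    and A_lin: "\<forall>t\<ge>0. cmat_linear (A t)"
    and A_0: "\<forall>X. A 0 X = X"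
    and A_int: "\<forall>t\<ge>0. \<forall>X. set_integrable lborel {0..t}
                   (\<lambda>s. \<kappa> (t - s) *\<^sub>R (B (A s X) - A s X))"
    and A_ode: "\<forall>t\<ge>0. \<forall>X. ((\<lambda>\<tau>. A \<tau> X) has_vector_derivative
                   (LINT s:{0..t}|lborel. \<kappa> (t - s) *\<^sub>R (B (A s X) - A s X))) (at t within {0..})"
  shows "\<forall>t\<ge>0. completely_positive (A t) \<and> A t (mat 1) = mat 1"
proof -
  define f0 where "f0 = (\<lambda>x. indicator {0..} x *\<^sub>R f x)"
  have f0m[measurable]: "f0 \<in> borel_measurable borel"
    using f_meas unfolding set_borel_measurable_def f0_def by simp
  have f0nn: "\<And>x. 0 \<le> f0 x" using f_nonneg by (simp add: f0_def indicator_def)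
  have nnle: "(\<integral>\<^sup>+ s. ennreal (norm (indicator {0..T} s *\<^sub>R f0 s)) \<partial>lborel) \<le> 1" for T
  proof -
    have "(\<integral>\<^sup>+ s. ennreal (norm (indicator {0..T} s *\<^sub>R f0 s)) \<partial>lborel) \<le> (\<integral>\<^sup>+ s\<in>{0..}. ennreal (f s) \<partial>lborel)"
      by (intro nn_integral_mono) (use f_nonneg in \<open>auto simp: f0_def indicator_def\<close>)
    then show ?thesis using f_int by simp
  qed
  have f0i: "set_integrable lborel {0..T} f0" for T
    unfolding set_integrable_def integrable_iff_bounded
    using nnle[of T] by (auto simp: le_less_trans[OF _ ennreal_one_less_top])
  have F0le: "(LINT s:{0..T}|lborel. f0 s) \<le> 1" for T
  proof -
    have "(LINT s:{0..T}|lborel. f0 s) = enn2real (\<integral>\<^sup>+ s. ennreal (indicator {0..T} s *\<^sub>R f0 s) \<partial>lborel)"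
      unfolding set_lebesgue_integral_def by (rule integral_eq_nn_integral) (auto simp: f0nn)
    also have "(\<integral>\<^sup>+ s. ennreal (indicator {0..T} s *\<^sub>R f0 s) \<partial>lborel) = (\<integral>\<^sup>+ s. ennreal (norm (indicator {0..T} s *\<^sub>R f0 s)) \<partial>lborel)"
      by (intro nn_integral_cong) (simp add: f0nn)
    also have "enn2real \<dots> \<le> enn2real 1" by (rule enn2real_mono[OF nnle]) simp
    finally show ?thesis by simp
  qed
  have F0nn: "0 \<le> (LINT s:{0..T}|lborel. f0 s)" for T
    unfolding set_lebesgue_integral_def by (intro integral_nonneg_AE AE_I2) (simp add: f0nn)
  have Fe: "(LINT s:{0..x}|lborel. f s) = (LINT s:{0..x}|lborel. f0 s)" for x
    by (rule set_lebesgue_integral_cong) (auto simp: f0_def)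
  have ge: "g x = 1 - (LINT s:{0..x}|lborel. f0 s)" if "0 \<le> x" for x using g_def that Fe by simp
  have Bbl: "bounded_linear B" using B_cp by (simp add: completely_positive_def bl_of_cmat_linear)
  have lim: "(\<lambda>k. Hit f0 B k t X) \<longlonglongrightarrow> A t X" if t: "0 \<le> t" for t X
  proof -
    define u where "u = (\<lambda>s. A s X)"
    have ucont: "continuous_on {0..} u" unfolding u_def
      by (rule continuous_on_vector_derivative) (use A_ode in auto)
    have ren: "u \<tau> = (1 - (LINT s:{0..\<tau>}|lborel. f0 s)) *\<^sub>R u 0 + conv f0 (\<lambda>s. B (u s)) \<tau>" if \<tau>: "0 \<le> \<tau>" for \<tau>
    proof -
      define kt where "kt = (\<lambda>x. indicator {0..\<tau>} x *\<^sub>R \<kappa> x)"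
      have ki0: "set_integrable lborel {0..\<tau>} \<kappa>" using \<kappa>_loc_int \<tau> by auto
      have ktm[measurable]: "kt \<in> borel_measurable borel"
        using borel_measurable_integrable[OF ki0[unfolded set_integrable_def]] unfolding kt_def by simp
      have kti: "set_integrable lborel {0..\<tau>} kt"
      proof -
        have "(\<lambda>x. indicator {0..\<tau>} x *\<^sub>R kt x) = (\<lambda>x. indicator {0..\<tau>} x *\<^sub>R \<kappa> x)"
          by (auto simp: kt_def indicator_def)
        then show ?thesis using ki0 unfolding set_integrable_def by simp
      qed
      show ?thesis
      proof (rule renewal[OF \<tau> f0m f0i _ ktm kti Bbl _ ucont])
        fix x assume "x \<in> {0..\<tau>}"
        show "\<bar>LINT s:{0..x}|lborel. f0 s\<bar> \<le> 1" using F0le[of x] F0nn[of x] by simp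
      next
        show "AE \<tau>' in lborel. \<tau>' \<in> {0..\<tau>} \<longrightarrow> conv (\<lambda>x. 1 - (LINT s:{0..x}|lborel. f0 s)) kt \<tau>' = f0 \<tau>'"
        proof (rule AE_mp[OF \<kappa>_eq], rule AE_I2, intro impI)
          fix \<tau>' assume h: "0 \<le> \<tau>' \<longrightarrow> (LBINT s:{0..\<tau>'}. g (\<tau>' - s) * \<kappa> s) = f \<tau>'" and \<tau>': "\<tau>' \<in> {0..\<tau>}"
          have "conv (\<lambda>x. 1 - (LINT s:{0..x}|lborel. f0 s)) kt \<tau>' = (LBINT s:{0..\<tau>'}. g (\<tau>' - s) * \<kappa> s)"
            unfolding conv_def
            by (rule set_lebesgue_integral_cong) (use \<tau>' in \<open>auto simp: ge kt_def\<close>)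
          then show "conv (\<lambda>x. 1 - (LINT s:{0..x}|lborel. f0 s)) kt \<tau>' = f0 \<tau>'"
            using h \<tau>' by (simp add: f0_def)
        qed
      next
        fix \<sigma> assume \<sigma>: "\<sigma> \<in> {0..\<tau>}"
        have "(LINT s:{0..\<sigma>}|lborel. \<kappa> (\<sigma> - s) *\<^sub>R (B (A s X) - A s X)) = conv kt (\<lambda>s. B (u s) - u s) \<sigma>"
          unfolding conv_def u_def
          by (rule set_lebesgue_integral_cong) (use \<sigma> in \<open>auto simp: kt_def\<close>)
        moreover have "((\<lambda>\<tau>. A \<tau> X) has_vector_derivative (LINT s:{0..\<sigma>}|lborel. \<kappa> (\<sigma> - s) *\<^sub>R (B (A s X) - A s X))) (at \<sigma> within {0..})"
          using A_ode \<sigma> by simp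
        ultimately show "(u has_vector_derivative conv kt (\<lambda>s. B (u s) - u s) \<sigma>) (at \<sigma> within {0..})"
          unfolding u_def by simp
      qed
    qed
    have "(\<lambda>k. Hit f0 B k t (u 0)) \<longlonglongrightarrow> u t"
      by (rule Hit_lim[OF f0m f0nn f0i F0le B_cp B_unital ucont ren t]) auto
    then show ?thesis using A_0 by (simp add: u_def)
  qed
  show ?thesis
  proof (intro allI impI conjI)
    fix t :: real assume t: "0 \<le> t"
    show "completely_positive (A t)"
      by (rule cp_limit[OF Hit_cp[OF f0m f0nn f0i F0le B_cp B_unital t] lim[OF t]]) (use A_lin t in auto)
    have "(\<lambda>k. Hit f0 B k t (mat 1)) \<longlonglongrightarrow> mat 1"
      using Hit_unit[OF f0m f0nn f0i F0le B_cp B_unital t] by simp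
    then show "A t (mat 1) = mat 1" using lim[OF t, of "mat 1"] LIMSEQ_unique by blast
  qed
qed


end
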